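(* Let $U$ be a unitary on $\mathcal H=\mathcal H_A\otimes\mathcal H_V$ with an orthonormal eigenbasis $|\phi_i\rangle$, $U|\phi_i\rangle=\lambda_i|\phi_i\rangle$. For every unit vector $|\beta_0\rangle=\sum_ia_i|\phi_i\rangle$ and every positive integer $T$, \[\|\bar P_T(\cdot|\beta_0)-\pi(\cdot|\beta_0)\|\le 2\sum_{i,j:\ \lambda_i\ne\lambda_j}\frac{|a_i|^2}{T\,|\lambda_i-\lambda_j|}.\]
   Context: $\mathcal H_V$ has orthonormal basis $\{|v\rangle:v\in V\}$ ($V$ finite), $\mathcal H_A$ has basis $|1\rangle,\dots,|d\rangle$. $P_t(v|\beta_0)=\sum_a|\langle a,v|U^t\beta_0\rangle|^2$, $\bar P_T(v|\beta_0)=\frac1T\sum_{t=0}^{T-1}P_t(v|\beta_0)$, $\pi(v|\beta_0)=\lim_{T\to\infty}\bar P_T(v|\beta_0)$. Total variation distance $\|d_1-d_2\|=\sum_{v\in V}|d_1(v)-d_2(v)|$. *)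

theory Defs
  imports "HOL-Analysis.Analysis"
begin

text \<open>Hilbert space H = H_A (x) H_V, modelled as complex vectors indexed by
  coin states 'd (finite, d = CARD('d)) times vertices 'v (finite V).
  The basis vector |a,v> is the coordinate (a,v).\<close>

definition cinner :: "complex ^ 'n \<Rightarrow> complex ^ 'n \<Rightarrow> complex" where
  "cinner x y = (\<Sum>k\<in>UNIV. cnj (x $ k) * y $ k)"

definition adjoint_mat :: "complex ^ 'n ^ 'm \<Rightarrow> complex ^ 'm ^ 'n" where
  "adjoint_mat A = (\<chi> i j. cnj (A $ j $ i))"

definition unitary_mat :: "complex ^ 'n ^ 'n \<Rightarrow> bool" where
  "unitary_mat U \<longleftrightarrow> U ** adjoint_mat U = mat 1 \<and> adjoint_mat U ** U = mat 1"

definition Pt :: "complex ^ ('d::finite \<times> 'v::finite) ^ ('d \<times> 'v) \<Rightarrow> nat \<Rightarrow> complex ^ ('d \<times> 'v) \<Rightarrow> 'v \<Rightarrow> real" where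
  "Pt U t \<beta>0 v = (\<Sum>a\<in>(UNIV::'d set). (cmod ((((\<lambda>x. U *v x) ^^ t) \<beta>0) $ (a, v)))\<^sup>2)"

definition PbarT :: "complex ^ ('d::finite \<times> 'v::finite) ^ ('d \<times> 'v) \<Rightarrow> nat \<Rightarrow> complex ^ ('d \<times> 'v) \<Rightarrow> 'v \<Rightarrow> real" where
  "PbarT U T \<beta>0 v = (1 / real T) * (\<Sum>t<T. Pt U t \<beta>0 v)"

definition limdist :: "complex ^ ('d::finite \<times> 'v::finite) ^ ('d \<times> 'v) \<Rightarrow> complex ^ ('d \<times> 'v) \<Rightarrow> 'v \<Rightarrow> real" where
  "limdist U \<beta>0 v = lim (\<lambda>T. PbarT U T \<beta>0 v)"

definition tv_dist :: "('v::finite \<Rightarrow> real) \<Rightarrow> ('v \<Rightarrow> real) \<Rightarrow> real" where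
  "tv_dist d1 d2 = (\<Sum>v\<in>UNIV. \<bar>d1 v - d2 v\<bar>)"

end

theory Submission
  imports Defs
begin


lemma mv_sum:
  fixes A :: "complex^'n^'m"
  shows "A *v (\<Sum>i\<in>S. c i *s f i) = (\<Sum>i\<in>S. c i *s (A *v f i))"
proof (induction S rule: infinite_finite_induct)
  case (insert x F) then show ?case by (simp add: matrix_vector_right_distrib vector_scalar_commute)
qed auto

lemma cinner_adj:
  fixes A :: "complex^'n^'m"
  shows "cinner (A *v x) y = cinner x (adjoint_mat A *v y)"
proof -
  have "cinner (A *v x) y = (\<Sum>k\<in>UNIV. \<Sum>l\<in>UNIV. cnj (A $ k $ l) * cnj (x $ l) * y $ k)"
    unfolding cinner_def matrix_vector_mult_def by (simp add: sum_distrib_right)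
  also have "\<dots> = (\<Sum>l\<in>UNIV. \<Sum>k\<in>UNIV. cnj (A $ k $ l) * cnj (x $ l) * y $ k)"
    by (rule sum.swap)
  also have "\<dots> = cinner x (adjoint_mat A *v y)"
    unfolding cinner_def adjoint_mat_def matrix_vector_mult_def by (simp add: sum_distrib_left mult_ac)
  finally show ?thesis .
qed

lemma cinner_smult: "cinner (c *s x) (d *s y) = cnj c * d * cinner x y"
  unfolding cinner_def by (simp add: sum_distrib_left mult_ac)

lemma unit_eig:
  assumes "unitary_mat U" "U *v x = l *s x" "cinner x x = 1"
  shows "cmod l = 1"
proof -
  have "cinner (U *v x) (U *v x) = cinner x x"
    using assms(1) by (simp add: cinner_adj matrix_vector_mul_assoc unitary_mat_def)
  hence "cnj l * l = 1" using assms by (simp add: cinner_smult)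
  hence "complex_of_real ((cmod l)^2) = 1" by (metis complex_norm_square mult.commute)
  hence "(cmod l)^2 = 1" by (metis of_real_eq_1_iff)
  hence "cmod l = 1 \<or> cmod l = -1" by (simp add: power2_eq_1_iff)
  thus ?thesis using norm_ge_zero[of l] by linarith
qed

lemma geo_bound:
  fixes m :: complex
  assumes "cmod m = 1" "m \<noteq> 1" "T \<ge> 1"
  shows "cmod ((1 / of_nat T) * (\<Sum>t<T. m^t)) \<le> 2 / (real T * cmod (m - 1))"
proof -
  have "(\<Sum>t<T. m^t) = (1 - m^T) / (1 - m)" using assms by (simp add: sum_gp_strict)
  moreover have "cmod (1 - m^T) \<le> 2"
    using norm_triangle_ineq4[of 1 "m^T"] assms by (simp add: norm_power)
  moreover have "cmod (1 - m) = cmod (m - 1)" by (simp add: norm_minus_commute)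
  moreover have "cmod (m - 1) > 0" using assms by simp
  ultimately show ?thesis using assms
    by (simp add: norm_divide norm_mult divide_right_mono)
qed

lemma geo_lim:
  fixes m :: complex
  assumes "cmod m = 1" "m \<noteq> 1"
  shows "(\<lambda>T. (1 / of_nat T) * (\<Sum>t<T. m^t)) \<longlonglongrightarrow> 0"
proof -
  have e: "\<forall>\<^sub>F T in sequentially. cmod ((1 / of_nat T) * (\<Sum>t<T. m^t)) \<le> 2 / (real T * cmod (m - 1))"
  proof (rule eventually_mono[OF eventually_ge_at_top[of "1::nat"]])
    fix T :: nat assume "1 \<le> T"
    then show "cmod ((1 / of_nat T) * (\<Sum>t<T. m^t)) \<le> 2 / (real T * cmod (m - 1))"
      using geo_bound[OF assms \<open>1 \<le> T\<close>] by blast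
  qed
  have "(\<lambda>T. (2 / cmod (m - 1)) * (1 / real T)) \<longlonglongrightarrow> 0"
    by (intro tendsto_mult_right_zero lim_const_over_n[where a=1, simplified])
  moreover have "(\<lambda>T. (2 / cmod (m - 1)) * (1 / real T)) = (\<lambda>T. 2 / (real T * cmod (m - 1)))"
    by (rule ext) (simp add: field_split_simps)
  ultimately have "(\<lambda>T. 2 / (real T * cmod (m - 1))) \<longlonglongrightarrow> 0" by simp
  then show ?thesis by (rule Lim_null_comparison[OF e])
qed


lemma sumVA: "(\<Sum>v\<in>UNIV. \<Sum>b\<in>UNIV. f (b,v)) = (\<Sum>k\<in>UNIV. f k)"
proof -
  have "(\<Sum>v\<in>UNIV. \<Sum>b\<in>UNIV. f (b,v)) = (\<Sum>b\<in>UNIV. \<Sum>v\<in>UNIV. f (b,v))"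
    by (rule sum.swap)
  also have "\<dots> = (\<Sum>k\<in>UNIV \<times> UNIV. f k)"
    by (simp add: sum.cartesian_product split_def)
  finally show ?thesis by simp
qed

lemma prod_cnj: "(\<Sum>i\<in>UNIV. f i) * cnj (\<Sum>j\<in>UNIV. f j) = (\<Sum>p\<in>UNIV. f (fst p) * cnj (f (snd p)))"
  for f :: "'a::finite \<Rightarrow> complex"
proof -
  have "(\<Sum>i\<in>UNIV. f i) * cnj (\<Sum>j\<in>UNIV. f j) = (\<Sum>i\<in>UNIV. \<Sum>j\<in>UNIV. f i * cnj (f j))"
    by (simp add: sum_product)
  also have "\<dots> = (\<Sum>p\<in>UNIV \<times> UNIV. f (fst p) * cnj (f (snd p)))"
    by (simp add: sum.cartesian_product split_def)
  finally show ?thesis by simp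
qed

lemma amgm: "(x::real) * y \<le> (x^2 + y^2) / 2"
proof -
  have "0 \<le> (x - y)^2" by simp
  then show ?thesis by (simp add: power2_diff field_simps)
qed

lemma normsq: "cinner x x = 1 \<Longrightarrow> (\<Sum>k\<in>UNIV. (cmod (x $ k))^2) = 1"
proof -
  assume h: "cinner x x = 1"
  have "complex_of_real (\<Sum>k\<in>UNIV. (cmod (x $ k))^2) = (\<Sum>k\<in>UNIV. cnj (x $ k) * x $ k)"
    by (simp only: of_real_sum complex_norm_square) (simp add: mult.commute)
  also have "\<dots> = 1" using h by (simp add: cinner_def)
  finally show ?thesis by (metis of_real_eq_1_iff)
qed

lemma cross_le: "cinner x x = 1 \<Longrightarrow> cinner y y = 1 \<Longrightarrow> (\<Sum>k\<in>UNIV. cmod (x $ k) * cmod (y $ k)) \<le> 1"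
proof -
  assume "cinner x x = 1" "cinner y y = 1"
  then have "(\<Sum>k\<in>UNIV. cmod (x $ k) * cmod (y $ k)) \<le> (\<Sum>k\<in>UNIV. ((cmod (x $ k))^2 + (cmod (y $ k))^2)/2)"
    by (intro sum_mono amgm)
  also have "\<dots> = ((\<Sum>k\<in>UNIV. (cmod (x $ k))^2) + (\<Sum>k\<in>UNIV. (cmod (y $ k))^2)) / 2"
    by (simp only: sum.distrib[symmetric] sum_divide_distrib)
  also have "\<dots> = 1" using normsq[OF \<open>cinner x x = 1\<close>] normsq[OF \<open>cinner y y = 1\<close>] by simp
  finally show ?thesis .
qed

lemma symm_bound:
  fixes c :: "'a \<times> 'a \<Rightarrow> real" and g :: "'a \<Rightarrow> real"
  assumes "finite N" "\<And>p. p \<in> N \<Longrightarrow> prod.swap p \<in> N" "\<And>p. c (prod.swap p) = c p"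
    "\<And>p. c p \<ge> 0"
  shows "(\<Sum>p\<in>N. c p * (g (fst p) * g (snd p))) \<le> (\<Sum>p\<in>N. c p * (g (fst p))^2)"
proof -
  have sw: "prod.swap ` N = N"
  proof
    show "prod.swap ` N \<subseteq> N" using assms(2) by auto
    show "N \<subseteq> prod.swap ` N"
    proof
      fix p assume "p \<in> N"
      then have "prod.swap p \<in> N" by (rule assms(2))
      then show "p \<in> prod.swap ` N" by (metis image_eqI swap_swap)
    qed
  qed
  have e2: "(\<Sum>p\<in>N. c p * (g (snd p))^2) = (\<Sum>p\<in>N. c p * (g (fst p))^2)"
  proof -
    have "(\<Sum>p\<in>N. c p * (g (fst p))^2) = (\<Sum>p\<in>prod.swap ` N. c p * (g (fst p))^2)" using sw by simp
    also have "\<dots> = (\<Sum>p\<in>N. c (prod.swap p) * (g (fst (prod.swap p)))^2)"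
      by (subst sum.reindex) (auto simp: inj_on_def)
    also have "\<dots> = (\<Sum>p\<in>N. c p * (g (snd p))^2)" using assms(3) by simp
    finally show ?thesis by simp
  qed
  have "(\<Sum>p\<in>N. c p * (g (fst p) * g (snd p))) \<le> (\<Sum>p\<in>N. c p * (((g (fst p))^2 + (g (snd p))^2)/2))"
    by (intro sum_mono mult_left_mono amgm assms(4))
  also have "\<dots> = ((\<Sum>p\<in>N. c p * (g (fst p))^2) + (\<Sum>p\<in>N. c p * (g (snd p))^2)) / 2"
    by (simp add: sum.distrib sum_divide_distrib distrib_left add_divide_distrib)
  also have "\<dots> = (\<Sum>p\<in>N. c p * (g (fst p))^2)" using e2 by simp
  finally show ?thesis .
qed



theorem mainTheorem8:
  fixes U :: "complex ^ ('d::finite \<times> 'v::finite) ^ ('d \<times> 'v)"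
    and \<phi> :: "'d \<times> 'v \<Rightarrow> complex ^ ('d \<times> 'v)"
    and lam :: "'d \<times> 'v \<Rightarrow> complex"
    and a :: "'d \<times> 'v \<Rightarrow> complex"
    and \<beta>0 :: "complex ^ ('d \<times> 'v)"
    and T :: nat
  assumes "unitary_mat U"
    and "\<And>i j. cinner (\<phi> i) (\<phi> j) = (if i = j then 1 else 0)"
    and "\<And>i. U *v \<phi> i = lam i *s \<phi> i"
    and "\<beta>0 = (\<Sum>i\<in>UNIV. a i *s \<phi> i)"
    and "cinner \<beta>0 \<beta>0 = 1"
    and "T \<ge> 1"
  shows "tv_dist (PbarT U T \<beta>0) (limdist U \<beta>0)
         \<le> 2 * (\<Sum>(i, j) \<in> {(i, j). lam i \<noteq> lam j}.
                  (cmod (a i))\<^sup>2 / (real T * cmod (lam i - lam j)))"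
proof -
  define w where "w p k = a (fst p) * cnj (a (snd p)) * (\<phi> (fst p) $ k * cnj (\<phi> (snd p) $ k))"
    for p :: "('d \<times> 'v) \<times> ('d \<times> 'v)" and k
  define \<mu> where "\<mu> p = lam (fst p) * cnj (lam (snd p))" for p :: "('d \<times> 'v) \<times> ('d \<times> 'v)"
  define S where "S n z = (1 / of_nat n) * (\<Sum>t<n. z^t)" for n :: nat and z :: complex
  define D where "D = {p :: ('d \<times> 'v) \<times> ('d \<times> 'v). lam (fst p) = lam (snd p)}"
  define N where "N = UNIV - D"
  define c where "c n p = 2 / (real n * cmod (lam (fst p) - lam (snd p)))"
    for n :: nat and p :: "('d \<times> 'v) \<times> ('d \<times> 'v)"
  have phin: "cinner (\<phi> i) (\<phi> i) = 1" for i using assms(2) by simp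
  have lu: "cmod (lam i) = 1" for i by (rule unit_eig[OF assms(1) assms(3) phin])
  have lc: "lam i * cnj (lam i) = 1" for i
    using complex_norm_square[of "lam i"] lu[of i] by simp
  have pow: "((\<lambda>x. U *v x) ^^ t) \<beta>0 = (\<Sum>i\<in>UNIV. (a i * lam i ^ t) *s \<phi> i)" for t
  proof (induction t)
    case 0 then show ?case using assms(4) by simp
  next
    case (Suc t)
    then show ?case by (simp add: mv_sum assms(3) vector_smult_assoc mult_ac)
  qed
  have Pt_eq: "complex_of_real (Pt U t \<beta>0 v) = (\<Sum>b\<in>UNIV. \<Sum>p\<in>UNIV. w p (b,v) * \<mu> p ^ t)" for t v
  proof -
    have "complex_of_real (Pt U t \<beta>0 v) =
        (\<Sum>b\<in>UNIV. (\<Sum>i\<in>UNIV. a i * lam i ^ t * \<phi> i $ (b,v)) * cnj (\<Sum>i\<in>UNIV. a i * lam i ^ t * \<phi> i $ (b,v)))"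
      unfolding Pt_def pow of_real_sum complex_norm_square by simp
    also have "\<dots> = (\<Sum>b\<in>UNIV. \<Sum>p\<in>UNIV. w p (b,v) * \<mu> p ^ t)"
      unfolding prod_cnj by (simp add: w_def \<mu>_def power_mult_distrib mult_ac)
    finally show ?thesis .
  qed
  have Pbar_eq: "complex_of_real (PbarT U n \<beta>0 v) = (\<Sum>b\<in>UNIV. \<Sum>p\<in>UNIV. w p (b,v) * S n (\<mu> p))" for n v
  proof -
    have "complex_of_real (PbarT U n \<beta>0 v) = (1 / of_nat n) * (\<Sum>t<n. \<Sum>b\<in>UNIV. \<Sum>p\<in>UNIV. w p (b,v) * \<mu> p ^ t)"
      unfolding PbarT_def by (simp add: Pt_eq)
    also have "(\<Sum>t<n. \<Sum>b\<in>UNIV. \<Sum>p\<in>UNIV. w p (b,v) * \<mu> p ^ t) = (\<Sum>b\<in>UNIV. \<Sum>p\<in>UNIV. \<Sum>t<n. w p (b,v) * \<mu> p ^ t)"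
      by (simp add: sum.swap[of _ "{..<n}"])
    finally show ?thesis
      by (simp add: S_def sum_distrib_left sum_distrib_right mult_ac)
  qed
  have muD: "\<mu> p = 1" if "p \<in> D" for p using that lc by (simp add: D_def \<mu>_def)
  have mu1: "\<mu> p - 1 = cnj (lam (snd p)) * (lam (fst p) - lam (snd p))" for p
    using lc[of "snd p"] by (simp add: \<mu>_def algebra_simps)
  have muN: "cmod (\<mu> p - 1) = cmod (lam (fst p) - lam (snd p))" for p
    unfolding mu1 by (simp add: norm_mult lu)
  have muN1: "\<mu> p \<noteq> 1" if "p \<in> N" for p
    using that muN[of p] by (auto simp: N_def D_def)
  have muU: "cmod (\<mu> p) = 1" for p by (simp add: \<mu>_def norm_mult lu)
  define Pi where "Pi v = (\<Sum>b\<in>UNIV. \<Sum>p\<in>D. w p (b,v))" for v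
  define E where "E n v = (\<Sum>b\<in>UNIV. \<Sum>p\<in>N. w p (b,v) * S n (\<mu> p))" for n v
  have split: "complex_of_real (PbarT U n \<beta>0 v) = Pi v + E n v" if "n \<ge> 1" for n v
  proof -
    have SD: "S n (\<mu> p) = 1" if "p \<in> D" for p
      using muD[OF that] \<open>n \<ge> 1\<close> by (simp add: S_def)
    have "(\<Sum>p\<in>UNIV. w p (b,v) * S n (\<mu> p)) = (\<Sum>p\<in>D. w p (b,v)) + (\<Sum>p\<in>N. w p (b,v) * S n (\<mu> p))" for b
    proof -
      have "(\<Sum>p\<in>UNIV. w p (b,v) * S n (\<mu> p)) = (\<Sum>p\<in>UNIV \<inter> D. w p (b,v) * S n (\<mu> p)) + (\<Sum>p\<in>UNIV - D. w p (b,v) * S n (\<mu> p))"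
        by (rule sum.Int_Diff) simp
      also have "(\<Sum>p\<in>UNIV \<inter> D. w p (b,v) * S n (\<mu> p)) = (\<Sum>p\<in>D. w p (b,v))"
        using SD by simp
      finally show ?thesis by (simp add: N_def)
    qed
    then show ?thesis by (simp add: Pbar_eq Pi_def E_def sum.distrib)
  qed
  have Elim: "(\<lambda>n. E n v) \<longlonglongrightarrow> 0" for v
    unfolding E_def
    by (intro tendsto_null_sum tendsto_mult_right_zero)
       (use geo_lim[OF muU muN1] in \<open>simp add: S_def\<close>)
  have lim: "limdist U \<beta>0 v = Re (Pi v)" for v
  proof -
    have "(\<lambda>n. Pi v + E n v) \<longlonglongrightarrow> Pi v + 0"
      by (intro tendsto_add tendsto_const Elim)
    then have l1: "(\<lambda>n. Pi v + E n v) \<longlonglongrightarrow> Pi v" by simp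
    have ev: "eventually (\<lambda>n. Pi v + E n v = complex_of_real (PbarT U n \<beta>0 v)) sequentially"
      by (rule eventually_mono[OF eventually_ge_at_top[of 1]]) (simp add: split)
    have "(\<lambda>n. complex_of_real (PbarT U n \<beta>0 v)) \<longlonglongrightarrow> Pi v"
      by (rule Lim_transform_eventually[OF l1 ev])
    then have "(\<lambda>n. Re (complex_of_real (PbarT U n \<beta>0 v))) \<longlonglongrightarrow> Re (Pi v)"
      by (rule tendsto_Re)
    then show ?thesis unfolding limdist_def by (simp add: limI)
  qed
  have diff: "\<bar>PbarT U T \<beta>0 v - limdist U \<beta>0 v\<bar> \<le> cmod (E T v)" for v
  proof -
    have "PbarT U T \<beta>0 v = Re (Pi v) + Re (E T v)"
      using arg_cong[OF split[OF assms(6), of v], of Re] by simp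
    then show ?thesis using lim abs_Re_le_cmod[of "E T v"] by simp
  qed
  have Ebound: "cmod (E T v) \<le> (\<Sum>b\<in>UNIV. \<Sum>p\<in>N. c T p * cmod (w p (b,v)))" for v
  proof -
    have "cmod (E T v) \<le> (\<Sum>b\<in>UNIV. \<Sum>p\<in>N. cmod (w p (b,v) * S T (\<mu> p)))"
      unfolding E_def by (rule order_trans[OF norm_sum sum_mono]) (rule norm_sum)
    also have "\<dots> \<le> (\<Sum>b\<in>UNIV. \<Sum>p\<in>N. c T p * cmod (w p (b,v)))"
    proof (intro sum_mono)
      fix b p assume "p \<in> N"
      have "cmod (S T (\<mu> p)) \<le> c T p"
        using geo_bound[OF muU muN1[OF \<open>p \<in> N\<close>] assms(6)] by (simp add: S_def c_def muN)
      then show "cmod (w p (b,v) * S T (\<mu> p)) \<le> c T p * cmod (w p (b,v))"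
        unfolding norm_mult by (metis mult.commute mult_right_mono norm_ge_zero)
    qed
    finally show ?thesis .
  qed
  have wsum: "(\<Sum>k\<in>UNIV. cmod (w p k)) \<le> cmod (a (fst p)) * cmod (a (snd p))" for p
  proof -
    have "(\<Sum>k\<in>UNIV. cmod (w p k)) = cmod (a (fst p)) * cmod (a (snd p)) * (\<Sum>k\<in>UNIV. cmod (\<phi> (fst p) $ k) * cmod (\<phi> (snd p) $ k))"
      by (simp add: w_def norm_mult sum_distrib_left)
    also have "\<dots> \<le> cmod (a (fst p)) * cmod (a (snd p)) * 1"
      by (intro mult_left_mono cross_le phin) simp
    finally show ?thesis by simp
  qed
  have cnn: "c T p \<ge> 0" for p by (simp add: c_def)
  have "tv_dist (PbarT U T \<beta>0) (limdist U \<beta>0) \<le> (\<Sum>v\<in>UNIV. cmod (E T v))"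
    unfolding tv_dist_def by (intro sum_mono diff)
  also have "\<dots> \<le> (\<Sum>v\<in>UNIV. \<Sum>b\<in>UNIV. \<Sum>p\<in>N. c T p * cmod (w p (b,v)))"
    by (intro sum_mono Ebound)
  also have "\<dots> = (\<Sum>p\<in>N. c T p * (\<Sum>k\<in>UNIV. cmod (w p k)))"
  proof -
    have "(\<Sum>v\<in>UNIV. \<Sum>b\<in>UNIV. \<Sum>p\<in>N. c T p * cmod (w p (b,v))) = (\<Sum>k\<in>UNIV. \<Sum>p\<in>N. c T p * cmod (w p k))"
      by (rule sumVA[where f = "\<lambda>k. \<Sum>p\<in>N. c T p * cmod (w p k)"])
    also have "\<dots> = (\<Sum>p\<in>N. \<Sum>k\<in>UNIV. c T p * cmod (w p k))" by (rule sum.swap)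
    finally show ?thesis by (simp add: sum_distrib_left)
  qed
  also have "\<dots> \<le> (\<Sum>p\<in>N. c T p * (cmod (a (fst p)) * cmod (a (snd p))))"
    by (intro sum_mono mult_left_mono wsum cnn)
  also have "\<dots> \<le> (\<Sum>p\<in>N. c T p * (cmod (a (fst p)))^2)"
  proof (rule symm_bound[where g = "\<lambda>i. cmod (a i)"])
    show "finite N" by simp
    show "prod.swap p \<in> N" if "p \<in> N" for p using that by (auto simp: N_def D_def)
    show "c T (prod.swap p) = c T p" for p by (simp add: c_def norm_minus_commute)
    show "c T p \<ge> 0" for p by (rule cnn)
  qed
  also have "\<dots> = 2 * (\<Sum>(i, j) \<in> {(i, j). lam i \<noteq> lam j}.
                  (cmod (a i))\<^sup>2 / (real T * cmod (lam i - lam j)))"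
  proof -
    have "N = {(i, j). lam i \<noteq> lam j}" by (auto simp: N_def D_def)
    then show ?thesis by (simp add: sum_distrib_left c_def split_def)
  qed
  finally show ?thesis .
qed

end
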